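(* Let $s,m$ be positive integers with $m$ odd and $n=sm$. Let $k$ be a positive integer with $t=\gcd(n,k)$ such that $\mathbb{F}_{2^t}\subseteq\mathbb{F}_{2^s}$ and $n/t$ is odd. Fix $\alpha\in\mathbb{F}_{2^s}\setminus\{0\}$ and let \[ G(x)=x^{2^k+1}+\alpha(x^{2^s}+x)^{2^n-1}+\alpha=\begin{cases}x^{2^k+1}+\alpha, & x\in\mathbb{F}_{2^s},\\ x^{2^k+1}, & x\notin\mathbb{F}_{2^s},\end{cases} \] as a function $\mathbb{F}_{2^n}\to\mathbb{F}_{2^n}$. Then $\delta_{G,c}\leq 3$ for every $c\in\mathbb{F}_{2^t}\setminus\{1\}$.
   Context: For $F:\mathbb{F}_{2^n}\to\mathbb{F}_{2^n}$ and $c\in\mathbb{F}_{2^n}$, let ${}_c\Delta_F(a,b)=\#\{x\in\mathbb{F}_{2^n}: F(x+a)-cF(x)=b\}$ and the $c$-differential uniformity is $\delta_{F,c}=\max\{{}_c\Delta_F(a,b): a,b\in\mathbb{F}_{2^n},\ a\neq 0\text{ if } c=1\}$. *)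

theory Defs
  imports Main
begin

definition subfield_pow2 :: "nat \<Rightarrow> 'a::field set" where
  "subfield_pow2 s = {x. x ^ (2 ^ s) = x}"

definition c_Delta :: "('a::{field,finite} \<Rightarrow> 'a) \<Rightarrow> 'a \<Rightarrow> 'a \<Rightarrow> 'a \<Rightarrow> nat" where
  "c_Delta F c a b = card {x. F (x + a) - c * F x = b}"

definition c_diff_uniformity :: "('a::{field,finite} \<Rightarrow> 'a) \<Rightarrow> 'a \<Rightarrow> nat" where
  "c_diff_uniformity F c = Max {c_Delta F c a b | a b. a \<noteq> 0 \<or> c \<noteq> 1}"

end

theory Submission imports Defs begin

lemma fermat_field:
  fixes z :: "'a::{field,finite}"
  assumes "z \<noteq> 0"
  shows "z ^ (card (UNIV::'a set) - 1) = 1"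
proof -
  let ?U = "UNIV - {0::'a}"
  have inj: "inj_on (\<lambda>y. z * y) ?U" using assms by (auto simp: inj_on_def)
  have img: "(\<lambda>y. z * y) ` ?U = ?U"
  proof
    show "(\<lambda>y. z * y) ` ?U \<subseteq> ?U" using assms by auto
  next
    show "?U \<subseteq> (\<lambda>y. z * y) ` ?U"
    proof
      fix y assume y: "y \<in> ?U"
      have "y = z * (y / z)" using assms by simp
      moreover have "y / z \<in> ?U" using y assms by simp
      ultimately show "y \<in> (\<lambda>y. z * y) ` ?U" by (rule image_eqI)
    qed
  qed
  have bij: "bij_betw (\<lambda>y. z * y) ?U ?U" using inj img by (simp add: bij_betw_def)
  have "prod id ?U = prod (\<lambda>y. z * y) ?U"
    using prod.reindex_bij_betw[OF bij, of id] by simp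
  also have "\<dots> = z ^ card ?U * prod id ?U"
    by (simp add: prod.distrib)
  finally have "z ^ card ?U * prod id ?U = 1 * prod id ?U" by simp
  moreover have "prod id ?U \<noteq> 0" by (simp add: prod_zero_iff)
  ultimately have "z ^ card ?U = 1" by simp
  moreover have "card ?U = card (UNIV::'a set) - 1" by (simp add: card_Diff_subset)
  ultimately show ?thesis by simp
qed

lemma char2:
  fixes n :: nat
  assumes "n > 0" "card (UNIV::'a::{field,finite} set) = 2 ^ n"
  shows "(1::'a) + 1 = 0"
proof -
  have "odd (2 ^ n - 1 :: nat)" using assms(1) by simp
  then have "(-1::'a) ^ (2 ^ n - 1) = -1" by simp
  moreover have "(-1::'a) ^ (card (UNIV::'a set) - 1) = 1" by (rule fermat_field) simp
  ultimately have "(-1::'a) = 1" using assms(2) by simp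
  then show ?thesis by (metis add.right_inverse)
qed

lemma frob2:
  fixes x y :: "'a::field"
  assumes "(1::'a) + 1 = 0"
  shows "(x + y) ^ (2 ^ j) = x ^ (2 ^ j) + y ^ (2 ^ j)"
proof (induction j)
  case 0 then show ?case by simp
next
  case (Suc j)
  have sq: "(u + v) ^ 2 = u ^ 2 + v ^ 2" for u v :: 'a
  proof -
    have "(u + v) ^ 2 = u^2 + v^2 + (1+1) * u * v" by (simp add: power2_eq_square algebra_simps)
    then show ?thesis using assms by simp
  qed
  have "(x + y) ^ (2 ^ Suc j) = ((x + y) ^ (2 ^ j)) ^ 2" by (simp add: power_mult[symmetric] mult.commute)
  also have "\<dots> = (x ^ (2 ^ j)) ^ 2 + (y ^ (2 ^ j)) ^ 2" using Suc sq by simp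
  also have "\<dots> = x ^ (2 ^ Suc j) + y ^ (2 ^ Suc j)" by (simp add: power_mult[symmetric] mult.commute)
  finally show ?case .
qed

lemma fix_mult:
  fixes z :: "'a::field"
  assumes "z ^ (2 ^ i) = z"
  shows "z ^ (2 ^ (i * p)) = z"
proof (induction p)
  case 0 then show ?case by simp
next
  case (Suc p)
  have "z ^ (2 ^ (i * Suc p)) = (z ^ (2 ^ (i * p))) ^ (2 ^ i)"
    by (simp add: power_add power_mult[symmetric] mult.commute)
  then show ?case using Suc assms by simp
qed

lemma fix_add:
  fixes z :: "'a::field"
  shows "z ^ (2 ^ (i + j)) = (z ^ (2 ^ i)) ^ (2 ^ j)"
  by (simp add: power_add power_mult)

lemma gcd_dvd_k:
  fixes n k :: nat
  assumes "odd (n div gcd n k)"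
  shows "gcd (2 * k) n dvd k"
proof -
  let ?t = "gcd n k" and ?d = "gcd (2*k) n"
  have "?d dvd gcd (2*k) (2*n)" by simp
  also have "gcd (2*k) (2*n) = 2 * ?t" by (simp add: gcd_mult_distrib_nat gcd.commute)
  finally have d2: "?d dvd 2 * ?t" .
  have td: "?t dvd ?d" by simp
  then obtain r where r: "?d = ?t * r" by blast
  show ?thesis
  proof (cases "?t = 0")
    case True then show ?thesis by simp
  next
    case False
    have "?t * r dvd ?t * 2" using d2 r by (simp add: mult.commute)
    then have "r dvd 2" using False by auto
    then have "r = 1 \<or> r = 2"
    proof -
      assume h: "r dvd 2"
      have "r \<noteq> 0" using h by (cases "r = 0") auto
      moreover have "r \<le> 2" using h by (simp add: dvd_imp_le)
      ultimately show ?thesis by linarith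
    qed
    then show ?thesis
    proof
      assume "r = 1" then show ?thesis using r by simp
    next
      assume "r = 2"
      then have "?d = 2 * ?t" using r by simp
      moreover have "?d dvd n" by simp
      ultimately have "2 * ?t dvd n" by simp
      then obtain w where nw0: "n = 2 * ?t * w" by blast
      obtain T where T: "T = ?t" by blast
      have nw: "n = T * (2 * w)" using nw0 T by (simp only: mult.assoc mult.commute mult.left_commute)
      have T0: "T \<noteq> 0" using False T by simp
      have "n div T = 2 * w" using T0 by (subst nw) simp
      then have "even (n div ?t)" using T by simp
      then show ?thesis using assms by simp
    qed
  qed
qed


lemma pow_inj:
  fixes w v :: "'a::{field,finite}" and n k :: nat
  assumes two: "(1::'a) + 1 = 0" and card: "card (UNIV::'a set) = 2 ^ n"
    and "k > 0" and odd: "odd (n div gcd n k)"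
    and eq: "w ^ (2 ^ k + 1) = v ^ (2 ^ k + 1)"
  shows "w = v"
proof (cases "v = 0")
  case True
  then show ?thesis using eq by simp
next
  case False
  define z where "z = w / v"
  have z1: "z ^ (2 ^ k + 1) = 1" using eq False by (simp add: z_def power_divide)
  then have zn0: "z \<noteq> 0" by auto
  have "z * z ^ (2 ^ k) = 1" using z1 by (simp add: power_add mult.commute)
  then have zq: "z ^ (2 ^ k) = inverse z" using inverse_unique by metis
  have f2k: "z ^ (2 ^ (k + k)) = z"
  proof -
    have "z ^ (2 ^ (k + k)) = (z ^ (2 ^ k)) ^ (2 ^ k)" by (rule fix_add)
    also have "\<dots> = inverse (z ^ (2 ^ k))" by (simp only: zq power_inverse)
    also have "\<dots> = z" by (simp only: zq inverse_inverse_eq)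
    finally show ?thesis .
  qed
  have fn: "z ^ (2 ^ n) = z"
  proof -
    have "z ^ (2 ^ n - 1) = 1" using fermat_field[OF zn0] card by simp
    moreover have "z ^ (2 ^ n) = z ^ (2 ^ n - 1) * z"
    proof -
      have e: "(2::nat) ^ n = (2 ^ n - 1) + 1" by simp
      show ?thesis by (subst e) (simp only: power_add power_one_right)
    qed
    ultimately show ?thesis by simp
  qed
  let ?g = "gcd (2 * k) n"
  obtain p r where pr: "2 * k * p = n * r + ?g" using bezout_nat[of "2*k" n] \<open>k > 0\<close> by auto
  have e2: "2 * k * p = (k + k) * p" by simp
  have "z = z ^ (2 ^ (2 * k * p))" using fix_mult[OF f2k, of p] by (simp only: e2)
  also have "\<dots> = (z ^ (2 ^ (n * r))) ^ (2 ^ ?g)" by (simp only: pr fix_add)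
  also have "\<dots> = z ^ (2 ^ ?g)" using fix_mult[OF fn, of r] by (simp only:)
  finally have fg: "z ^ (2 ^ ?g) = z" by simp
  obtain j where kj: "k = ?g * j" using gcd_dvd_k[OF odd] by blast
  have zk: "z ^ (2 ^ k) = z" by (subst kj) (rule fix_mult[OF fg])
  have "z ^ (2 ^ k + 1) = z ^ (2 ^ k) * z ^ 1" by (rule power_add)
  then have "z * z = 1" using z1 by (simp only: zk power_one_right)
  then have "(z + 1) * (z + 1) = 0"
  proof -
    assume "z * z = 1"
    have "(z + 1) * (z + 1) = z * z + 1 + (1 + 1) * z" by (simp add: algebra_simps)
    then show ?thesis using \<open>z * z = 1\<close> two by simp
  qed
  then have "z = - 1" by (simp add: eq_neg_iff_add_eq_0)
  moreover have "(-1::'a) = 1" using two by (simp add: add_eq_0_iff2 eq_neg_iff_add_eq_0)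
  ultimately have "z = 1" by (rule trans)
  then have "w / v = 1" by (simp only: z_def)
  then show ?thesis using False by (simp only: divide_eq_1_iff)
qed


lemma card3: "card {p, q, r :: 'a} \<le> 3"
  by (simp add: card_insert_if)

lemma card2: "card {p, q :: 'a} \<le> 3"
  by (simp add: card_insert_if)

theorem theorem2p13:
  fixes s m n k :: nat and \<alpha> c :: "'a::{field,finite}"
  assumes "s > 0" and "m > 0" and "odd m" and "n = s * m"
    and "card (UNIV :: 'a set) = 2 ^ n"
    and "k > 0"
    and "subfield_pow2 (gcd n k) \<subseteq> (subfield_pow2 s :: 'a set)"
    and "odd (n div gcd n k)"
    and "\<alpha> \<in> subfield_pow2 s" and "\<alpha> \<noteq> 0"
    and "c \<in> subfield_pow2 (gcd n k)" and "c \<noteq> 1"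
  shows "c_diff_uniformity
           (\<lambda>x. x ^ (2 ^ k + 1) + \<alpha> * (x ^ (2 ^ s) + x) ^ (2 ^ n - 1) + \<alpha>) c \<le> 3"
proof -
  note card = assms(5) and kpos = assms(6) and oddt = assms(8) and c1 = assms(12)
  have n0: "n > 0" using assms(1,2,4) by simp
  have two: "(1::'a) + 1 = 0" by (rule char2[OF n0 card])
  have xx: "x + x = 0" for x :: 'a
  proof -
    have "x + x = x * (1 + 1)" by (simp add: algebra_simps)
    then show ?thesis using two by simp
  qed
  have neg: "- x = x" for x :: 'a using xx by (rule minus_unique)
  have hval: "(x ^ (2 ^ s) + x) ^ (2 ^ n - 1) = (if x ^ (2 ^ s) = x then 0 else 1)" for x :: 'a
  proof (cases "x ^ (2 ^ s) = x")
    case True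
    have "(2::nat) ^ 1 \<le> 2 ^ n" using n0 by (intro power_increasing) auto
    then have "(2::nat) ^ n - 1 \<noteq> 0" by simp
    then show ?thesis using True xx by simp
  next
    case False
    have "x ^ (2 ^ s) + x \<noteq> 0"
    proof
      assume "x ^ (2 ^ s) + x = 0"
      then have "x ^ (2 ^ s) = - x" by (rule add_eq_0_iff2[THEN iffD1])
      then show False using False neg by simp
    qed
    then have "(x ^ (2 ^ s) + x) ^ (card (UNIV::'a set) - 1) = 1" by (rule fermat_field)
    then show ?thesis using False card by simp
  qed
  define ind where "ind x = (if x ^ (2 ^ s) = x then (1::'a) else 0)" for x :: 'a
  define G where "G = (\<lambda>x::'a. x ^ (2 ^ k + 1) + \<alpha> * (x ^ (2 ^ s) + x) ^ (2 ^ n - 1) + \<alpha>)"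
  have Geq: "G x = x ^ (2 ^ k + 1) + \<alpha> * ind x" for x
    unfolding G_def ind_def hval using xx[of \<alpha>] by (simp add: add.assoc)
  obtain j where kj: "k = gcd n k * j" by (metis gcd_dvd2 dvdE)
  have ct: "c ^ (2 ^ gcd n k) = c" using assms(11) by (simp add: subfield_pow2_def)
  have cq: "c ^ (2 ^ k) = c" by (subst kj) (rule fix_mult[OF ct])
  define u where "u = 1 + c"
  have u0: "u \<noteq> 0"
  proof
    assume "u = 0"
    then have "c + 1 = 0" unfolding u_def by (simp only: add.commute)
    then have "c = - 1" by (simp only: eq_neg_iff_add_eq_0)
    then show False using neg[of 1] c1 by simp
  qed
  have uq: "u ^ (2 ^ k) = u" unfolding u_def by (simp add: frob2[OF two] cq)
  have Dkey: "u * ((x + a) ^ (2 ^ k + 1) - c * x ^ (2 ^ k + 1))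
      = (u * x + a) ^ (2 ^ k + 1) + c * a ^ (2 ^ k + 1)" for x a :: 'a
  proof -
    define X where "X = x ^ (2 ^ k)"
    define A where "A = a ^ (2 ^ k)"
    have e1: "(x + a) ^ (2 ^ k + 1) = (X + A) * (x + a)"
      unfolding X_def A_def by (simp add: power_add frob2[OF two])
    have e2: "(u * x + a) ^ (2 ^ k + 1) = (u * X + A) * (u * x + a)"
      unfolding X_def A_def by (simp add: power_add frob2[OF two] power_mult_distrib uq)
    have e3: "x ^ (2 ^ k + 1) = X * x" "a ^ (2 ^ k + 1) = A * a"
      unfolding X_def A_def by (simp_all add: power_add)
    have "u * ((X + A) * (x + a) - c * (X * x)) = (u * X + A) * (u * x + a) + c * (A * a) - (1 + 1) * ((c + c * c) * X * x)"
      unfolding u_def by (simp add: algebra_simps)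
    then have eq: "u * ((X + A) * (x + a) - c * (X * x)) = (u * X + A) * (u * x + a) + c * (A * a)"
      using two by simp
    show ?thesis unfolding e1 e2 e3 by (rule eq)
  qed
  have Dinj: "x = y" if "(x + a) ^ (2 ^ k + 1) - c * x ^ (2 ^ k + 1) = (y + a) ^ (2 ^ k + 1) - c * y ^ (2 ^ k + 1)" for x y a :: 'a
  proof -
    have "(u * x + a) ^ (2 ^ k + 1) + c * a ^ (2 ^ k + 1) = (u * y + a) ^ (2 ^ k + 1) + c * a ^ (2 ^ k + 1)"
      using Dkey[of x a] Dkey[of y a] that by simp
    then have "(u * x + a) ^ (2 ^ k + 1) = (u * y + a) ^ (2 ^ k + 1)" by simp
    then have "u * x + a = u * y + a" by (rule pow_inj[OF two card kpos oddt])
    then show ?thesis using u0 by simp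
  qed
  have key: "c_Delta G c a b \<le> 3" for a b
  proof -
    define Sol where "Sol = {x. G (x + a) - c * G x = b}"
    define e where "e x = ind (x + a) - c * ind x" for x
    have solD: "(x + a) ^ (2 ^ k + 1) - c * x ^ (2 ^ k + 1) = b - \<alpha> * e x" if "x \<in> Sol" for x
      using that unfolding Sol_def e_def Geq by (simp add: algebra_simps)
    have inj: "inj_on e Sol"
    proof (rule inj_onI)
      fix x y assume "x \<in> Sol" "y \<in> Sol" "e x = e y"
      then show "x = y" using solD[of x] solD[of y] Dinj[of x a y] by simp
    qed
    have fr: "(x + a) ^ (2 ^ s) = x ^ (2 ^ s) + a ^ (2 ^ s)" for x by (rule frob2[OF two])
    obtain E where E: "e ` Sol \<subseteq> E" "card E \<le> 3" "finite E"
    proof (cases "a ^ (2 ^ s) = a")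
      case True
      have "e x \<in> {1 - c, 0}" for x
      proof -
        have "((x + a) ^ (2 ^ s) = x + a) = (x ^ (2 ^ s) = x)" using fr[of x] True by auto
        then show ?thesis unfolding e_def ind_def by auto
      qed
      then show ?thesis by (intro that[of "{1 - c, 0}"] card2) auto
    next
      case False
      have "e x \<in> {1, - c, 0}" for x
      proof -
        have "\<not> ((x + a) ^ (2 ^ s) = x + a \<and> x ^ (2 ^ s) = x)" using fr[of x] False by auto
        then show ?thesis unfolding e_def ind_def by auto
      qed
      then show ?thesis by (intro that[of "{1, - c, 0}"] card3) auto
    qed
    have "c_Delta G c a b = card Sol" unfolding c_Delta_def Sol_def ..
    also have "\<dots> = card (e ` Sol)" using inj by (simp add: card_image)
    also have "\<dots> \<le> card E" using E by (simp add: card_mono)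
    also have "\<dots> \<le> 3" using E by simp
    finally show ?thesis .
  qed
  let ?S = "{c_Delta G c a b | a b. a \<noteq> 0 \<or> c \<noteq> 1}"
  have fin: "finite ?S"
  proof (rule finite_subset)
    show "?S \<subseteq> (\<lambda>p. c_Delta G c (fst p) (snd p)) ` UNIV"
    proof clarify
      fix a b
      show "c_Delta G c a b \<in> (\<lambda>p. c_Delta G c (fst p) (snd p)) ` UNIV"
        by (rule image_eqI[of _ _ "(a, b)"]) simp_all
    qed
  qed simp
  have ne: "?S \<noteq> {}" using c1 by blast
  have "c_diff_uniformity G c \<le> 3"
    unfolding c_diff_uniformity_def using fin ne key by (auto simp: Max_le_iff)
  then show ?thesis unfolding G_def .
qed

end
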